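(* Let $i,j,m\in\mathbb{N}$, and let $A=(a_0,\dots,a_i)$ and $B=(b_0,\dots,b_j)$ be finite sequences of positive integers satisfying $m[a_i,\dots,a_0]=[b_0,\dots,b_j]$. Then the concatenation $BA=(b_0,\dots,b_j,a_0,\dots,a_i)$ is an $m$-palindrome if and only if $m[a_i,\dots,a_1]=[b_0,\dots,b_{j-1}]$.
   Context: For a finite sequence $(c_0,\dots,c_k)$ of positive integers, $[c_0,\dots,c_k]$ denotes the value of the finite continued fraction $c_0+\cfrac{1}{c_1+\cfrac{1}{\ddots+\cfrac{1}{c_k}}}$. A finite sequence $(c_0,\dots,c_k)$ of positive integers is an $m$-palindrome ($m\in\mathbb{N}$) if $[c_0,\dots,c_k]=m\,[c_k,\dots,c_0]$. *)

theory Defs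
  imports Complex_Main "HOL-Library.Extended_Real"
begin

text \<open>The empty continued fraction has the standard convention value infinity (= 1/0),
  needed for the degenerate cases i = 0 or j = 0 of the lemma.\<close>
fun cf :: "nat list \<Rightarrow> ereal" where
  "cf [] = \<infinity>"
| "cf (c # cs) = ereal (real c) + 1 / cf cs"

definition pos_seq :: "nat list \<Rightarrow> bool" where
  "pos_seq cs \<longleftrightarrow> cs \<noteq> [] \<and> (\<forall>c\<in>set cs. 0 < c)"

definition m_palindrome :: "nat \<Rightarrow> nat list \<Rightarrow> bool" where
  "m_palindrome m cs \<longleftrightarrow> pos_seq cs \<and> cf cs = ereal (real m) * cf (rev cs)"

end

theory Submission
  imports Defs
begin

type_synonym m4 = "nat \<times> nat \<times> nat \<times> nat"

fun mmul :: "m4 \<Rightarrow> m4 \<Rightarrow> m4" where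
  "mmul (a,b,c,d) (e,f,g,h) = (a*e+b*g, a*f+b*h, c*e+d*g, c*f+d*h)"

fun tr :: "m4 \<Rightarrow> m4" where "tr (a,b,c,d) = (a,c,b,d)"

fun mat :: "nat list \<Rightarrow> m4" where
  "mat [] = (1,0,0,1)"
| "mat (x#xs) = mmul (x,1,1,0) (mat xs)"

lemma mmul_assoc: "mmul (mmul A B) C = mmul A (mmul B C)"
  by (cases A; cases B; cases C) (simp add: algebra_simps)

lemma mmul_id: "mmul (1,0,0,1) A = A" "mmul A (1,0,0,1) = A" "mmul (Suc 0,0,0,Suc 0) A = A"
  by (cases A; simp)+

lemma mat_append: "mat (xs@ys) = mmul (mat xs) (mat ys)"
  by (induction xs) (simp_all add: mmul_id mmul_assoc)

lemma tr_mmul: "tr (mmul A B) = mmul (tr B) (tr A)"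
  by (cases A; cases B) (simp add: algebra_simps)

lemma mat_rev: "mat (rev xs) = tr (mat xs)"
proof (induction xs)
  case Nil then show ?case by simp
next
  case (Cons x xs)
  have "mat (rev (x#xs)) = mmul (mat (rev xs)) (mat [x])" by (simp add: mat_append)
  also have "\<dots> = mmul (tr (mat xs)) (tr (x,1,1,0))" using Cons by (simp add: mmul_id)
  also have "\<dots> = tr (mat (x#xs))" by (simp add: tr_mmul)
  finally show ?case .
qed

definition fr :: "nat \<Rightarrow> nat \<Rightarrow> ereal" where
  "fr a c = (if c = 0 then \<infinity> else ereal (real a / real c))"

lemma mat_pos:
  assumes "\<forall>x\<in>set xs. 0 < x" "mat xs = (a,b,c,d)"
  shows "0 < a \<and> (xs \<noteq> [] \<longrightarrow> 0 < b \<and> 0 < c)"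
  using assms
proof (induction xs arbitrary: a b c d)
  case Nil then show ?case by simp
next
  case (Cons x xs)
  obtain a' b' c' d' where m: "mat xs = (a',b',c',d')" by (cases "mat xs") auto
  have ih: "0 < a' \<and> (xs \<noteq> [] \<longrightarrow> 0 < b' \<and> 0 < c')" using Cons m by auto
  have x: "x > 0" using Cons by auto
  show ?case
  proof (cases xs)
    case Nil then show ?thesis using Cons x by auto
  next
    case (Cons y ys)
    then show ?thesis using \<open>mat (x#xs) = _\<close> m ih x by auto
  qed
qed

lemma cf_mat:
  assumes "\<forall>x\<in>set xs. 0 < x" "mat xs = (a,b,c,d)"
  shows "cf xs = fr a c"
  using assms
proof (induction xs arbitrary: a b c d)
  case Nil then show ?case by (simp add: fr_def)
next
  case (Cons x xs)
  obtain a' b' c' d' where m: "mat xs = (a',b',c',d')" by (cases "mat xs") auto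
  have ih: "cf xs = fr a' c'" using Cons m by auto
  have ap: "a' > 0" using mat_pos[OF _ m] Cons by auto
  have e: "a = x*a'+c'" "c = a'" using Cons(3) m by auto
  show ?case
  proof (cases "c' = 0")
    case True then show ?thesis using ih e ap by (simp add: fr_def)
  next
    case False
    have "cf (x#xs) = ereal (real x) + ereal (real c' / real a')"
    proof -
      have "1 / ereal (real a' / real c') = ereal (real c' / real a')" using False ap
        by (simp add: one_ereal_def)
      then show ?thesis using ih False by (simp add: fr_def)
    qed
    also have "\<dots> = ereal ((real x * real a' + real c') / real a')"
      using ap by (simp add: field_simps)
    finally show ?thesis using e ap by (simp add: fr_def)
  qed
qed

lemma fr_eq:
  assumes "0 < m" "0 < a" "0 < c"
  shows "ereal (real m) * fr a b = fr c d \<longleftrightarrow> m*a*d = c*b"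
proof (cases "b = 0")
  case True
  then show ?thesis using assms by (auto simp: fr_def)
next
  case False
  show ?thesis
  proof (cases "d = 0")
    case True then show ?thesis using assms False by (auto simp: fr_def)
  next
    case False2: False
    have "ereal (real m) * fr a b = fr c d \<longleftrightarrow> real m * (real a / real b) = real c / real d"
      using False False2 by (simp add: fr_def)
    also have "\<dots> \<longleftrightarrow> real m * real a * real d = real c * real b"
      using False False2 by (simp add: field_simps)
    also have "\<dots> \<longleftrightarrow> m*a*d = c*b" by (metis of_nat_eq_iff of_nat_mult)
    finally show ?thesis .
  qed
qed

lemma fr_zero: "0 < a \<Longrightarrow> ereal 0 * fr a b \<noteq> fr c d \<or> True" by simp

theorem lemma3p4:
  fixes m :: nat and as bs :: "nat list"
  assumes "pos_seq as" and "pos_seq bs"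
    and "ereal (real m) * cf (rev as) = cf bs"
  shows "m_palindrome m (bs @ as) \<longleftrightarrow>
         ereal (real m) * cf (rev (tl as)) = cf (butlast bs)"
proof -
  have pa: "\<forall>x\<in>set as. 0 < x" "as \<noteq> []" and pb: "\<forall>x\<in>set bs. 0 < x" "bs \<noteq> []"
    using assms(1,2) by (auto simp: pos_seq_def)
  obtain A11 A12 A21 A22 where mA: "mat as = (A11,A12,A21,A22)" by (cases "mat as") auto
  obtain B11 B12 B21 B22 where mB: "mat bs = (B11,B12,B21,B22)" by (cases "mat bs") auto
  have Ap: "A11 > 0" "A12 > 0" "A21 > 0" using mat_pos[OF pa(1) mA] pa(2) by auto
  have Bp: "B11 > 0" "B12 > 0" "B21 > 0" using mat_pos[OF pb(1) mB] pb(2) by auto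
  have rA: "mat (rev as) = (A11,A21,A12,A22)" using mA by (simp add: mat_rev)
  have cfrA: "cf (rev as) = fr A11 A12" using cf_mat[OF _ rA] pa by auto
  have cfB: "cf bs = fr B11 B21" using cf_mat[OF pb(1) mB] .
  have m0: "m > 0"
  proof (rule ccontr)
    assume "\<not> m > 0"
    then have "m = 0" by simp
    then have "cf bs = 0" using assms(3) cfrA Ap by (simp add: fr_def zero_ereal_def)
    then show False using cfB Bp by (auto simp: fr_def split: if_splits)
  qed
  have hyp: "m*A11*B21 = B11*A12" using assms(3) fr_eq[OF m0 Ap(1) Bp(1)] cfrA cfB by simp
  obtain a0 tlA where as: "as = a0 # tlA" using pa(2) by (cases as) auto
  obtain T11 T12 T21 T22 where mT: "mat tlA = (T11,T12,T21,T22)" by (cases "mat tlA") auto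
  have "mat as = (a0*T11+T21, a0*T12+T22, T11, T12)" using as mT by simp
  then have T: "T11 = A21" "T12 = A22" using mA by auto
  have cfT: "cf (rev (tl as)) = fr A21 A22"
  proof -
    have r: "mat (rev tlA) = (A21, T21, A22, T22)" using mT T by (simp add: mat_rev)
    have p: "\<forall>x\<in>set (rev tlA). 0 < x" using pa(1) as by simp
    show ?thesis using cf_mat[OF p r] as by simp
  qed
  obtain bl bj where bs: "bs = bl @ [bj]" using pb(2) by (metis rev_exhaust)
  obtain U11 U12 U21 U22 where mU: "mat bl = (U11,U12,U21,U22)" by (cases "mat bl") auto
  have "mat bs = (U11*bj+U12, U11, U21*bj+U22, U21)" using bs mU by (simp add: mat_append)
  then have U: "U11 = B12" "U21 = B22" using mB by auto
  have cfU: "cf (butlast bs) = fr B12 B22" using cf_mat[OF _ mU] U bs pb(1) by simp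
  have goalR: "ereal (real m) * cf (rev (tl as)) = cf (butlast bs) \<longleftrightarrow> m*A21*B22 = B12*A22"
    using fr_eq[OF m0 Ap(3) Bp(2)] cfT cfU by simp
  have mM: "mat (bs@as) = (B11*A11+B12*A21, B11*A12+B12*A22, B21*A11+B22*A21, B21*A12+B22*A22)"
    using mA mB by (simp add: mat_append)
  have mMr: "mat (rev (bs@as)) = (B11*A11+B12*A21, B21*A11+B22*A21, B11*A12+B12*A22, B21*A12+B22*A22)"
    using mM by (simp only: mat_rev) simp
  have pM: "\<forall>x\<in>set (bs@as). 0 < x" using pa pb by auto
  have M11: "B11*A11+B12*A21 > 0" using Ap Bp by simp
  have pMr: "\<forall>x\<in>set (rev (bs@as)). 0 < x" using pM by auto
  have c1: "cf (bs@as) = fr (B11*A11+B12*A21) (B21*A11+B22*A21)" using cf_mat[OF pM mM] .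
  have c2: "cf (rev (bs@as)) = fr (B11*A11+B12*A21) (B11*A12+B12*A22)" using cf_mat[OF pMr mMr] .
  have "m_palindrome m (bs@as) \<longleftrightarrow> cf (bs@as) = ereal (real m) * cf (rev (bs@as))"
    using pM pb(2) unfolding m_palindrome_def pos_seq_def by blast
  also have "\<dots> \<longleftrightarrow>
        ereal (real m) * fr (B11*A11+B12*A21) (B11*A12+B12*A22) = fr (B11*A11+B12*A21) (B21*A11+B22*A21)"
    unfolding c1 c2 by (rule eq_commute)
  also have "\<dots> \<longleftrightarrow> m*(B11*A11+B12*A21)*(B21*A11+B22*A21) = (B11*A11+B12*A21)*(B11*A12+B12*A22)"
    using fr_eq[OF m0 M11 M11] .
  also have "\<dots> \<longleftrightarrow> m*(B21*A11+B22*A21) = B11*A12+B12*A22"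
    using M11 mult_cancel_left[of "B11*A11+B12*A21" "m*(B21*A11+B22*A21)" "B11*A12+B12*A22"]
    by (simp add: ac_simps) blast
  also have "\<dots> \<longleftrightarrow> m*A21*B22 = B12*A22"
    using hyp by (simp add: algebra_simps)
  finally show ?thesis using goalR by simp
qed

end
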